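(* Let $K$ be a field, $c\in K\setminus\{0\}$, $n\ge1$, let $f$ be a $c$-frieze of order $n$ over $K$, and put $s=f(0,n)$, $t=f(1,n+1)$. Then for every integer $k$ with $0\le k\le n$ and every $i\in\mathbb{Z}$: (a) $f(2i,2i+k-1)=\dfrac{f(2i-1,2i+k-1)\,f(2i,2i+n-1)}{t}+\dfrac{f(2i-2,2i+k-1)}{c}$; (b) $f(2i+1,2i+k)=\dfrac{f(2i,2i+k)\,f(2i+1,2i+n)}{s}+\dfrac{f(2i-1,2i+k)}{c}$.
   Context: The $c$-continuant polynomials $P_k=P_k^c$ ($k\ge-1$) are defined by $P_{-1}=0$, $P_0=1$, and for $k\ge1$, $P_k(x_1,\dots,x_k)=x_kP_{k-1}(x_1,\dots,x_{k-1})+cP_{k-2}(x_1,\dots,x_{k-2})$. A family $(x_i)_{i\in\mathbb{Z}}$ in $K$ is $n$-admissible if $P_{n+2}(x_i,\dots,x_{i+n+1})=0$ for all $i$. Let $\mathbb{B}_n=\{(i,j)\in\mathbb{Z}^2:-2\le j-i\le n+1\}$. A $c$-frieze of order $n$ is a function $f:\mathbb{B}_n\to K$ for which there is an $n$-admissible family $(x_i)$ with $f(i,j)=P_{j-i+1}(x_i,\dots,x_j)$ for all $(i,j)\in\mathbb{B}_n$. It is known that $f(2i,2i+n)=s$, $f(2i+1,2i+n+1)=t$ for all $i$ and $st=(-c)^{n+1}$, so $s,t\neq0$. *)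

theory Defs
  imports Main
begin

(* c-continuant of a REVERSED argument list: contr c [x_k, ..., x_1] = P_k(x_1,...,x_k) *)
fun contr :: "'a::comm_ring_1 \<Rightarrow> 'a list \<Rightarrow> 'a" where
  "contr c [] = 1"
| "contr c [x] = x"
| "contr c (x # y # ys) = x * contr c (y # ys) + c * contr c ys"

(* P_{j-i+1}(x_i,...,x_j), with P_{-1} = 0 (and 0 for shorter, never used) *)
definition cseg :: "'a::comm_ring_1 \<Rightarrow> (int \<Rightarrow> 'a) \<Rightarrow> int \<Rightarrow> int \<Rightarrow> 'a" where
  "cseg c x i j = (if j - i + 1 < 0 then 0 else contr c (rev (map x [i..j])))"

definition admissible :: "'a::comm_ring_1 \<Rightarrow> nat \<Rightarrow> (int \<Rightarrow> 'a) \<Rightarrow> bool" where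
  "admissible c n x \<longleftrightarrow> (\<forall>i. cseg c x i (i + int n + 1) = 0)"

definition Bn :: "nat \<Rightarrow> (int \<times> int) set" where
  "Bn n = {(i, j). -2 \<le> j - i \<and> j - i \<le> int n + 1}"

definition is_frieze :: "'a::comm_ring_1 \<Rightarrow> nat \<Rightarrow> (int \<Rightarrow> int \<Rightarrow> 'a) \<Rightarrow> bool" where
  "is_frieze c n f \<longleftrightarrow>
     (\<exists>x. admissible c n x \<and> (\<forall>(i, j) \<in> Bn n. f i j = cseg c x i j))"

end

theory Submission
  imports Defs
begin

fun CC :: "'a::comm_ring_1 \<Rightarrow> (int \<Rightarrow> 'a) \<Rightarrow> int \<Rightarrow> nat \<Rightarrow> 'a" where
  "CC c x i 0 = 1"
| "CC c x i (Suc 0) = x i"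
| "CC c x i (Suc (Suc m)) = x (i + int m + 1) * CC c x i (Suc m) + c * CC c x i m"

lemma rev_step: "rev (map x [i..i + int m]) = x (i + int m) # rev (map x [i..i + int m - 1])"
  by (subst upto_rec2) auto

lemma cseg_C: "cseg c x i (i + int m - 1) = CC c x i m"
proof (induction c x i m rule: CC.induct)
  case (1 c x i) thus ?case by (simp add: cseg_def)
next
  case (2 c x i) thus ?case by (simp add: cseg_def)
next
  case (3 c x i m)
  have e1: "i + int (Suc (Suc m)) - 1 = i + int (Suc m)" by simp
  have "rev (map x [i..i + int (Suc m)]) = x (i + int m + 1) # (x (i + int m) # rev (map x [i..i + int m - 1]))"
    using rev_step[of x i "Suc m"] rev_step[of x i m] by (simp add: algebra_simps)
  hence "cseg c x i (i + int (Suc (Suc m)) - 1) = x (i + int m + 1) * contr c (x (i + int m) # rev (map x [i..i + int m - 1])) + c * contr c (rev (map x [i..i + int m - 1]))"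
    unfolding e1 cseg_def by simp
  also have "contr c (x (i + int m) # rev (map x [i..i + int m - 1])) = CC c x i (Suc m)"
    using 3(1) rev_step[of x i m] by (simp add: cseg_def)
  also have "contr c (rev (map x [i..i + int m - 1])) = CC c x i m"
    using 3(2) by (simp add: cseg_def)
  finally show ?case by simp
qed

lemma CC_left: "CC c x i (Suc (Suc m)) = x i * CC c x (i+1) (Suc m) + c * CC c x (i+2) m"
proof (induction m rule: nat_less_induct)
  case (1 m)
  show ?case
  proof (cases m)
    case 0 thus ?thesis by (simp add: algebra_simps)
  next
    case (Suc m1)
    show ?thesis
    proof (cases m1)
      case 0 thus ?thesis using Suc by (simp add: algebra_simps)
    next
      case (Suc m2)
      have h1: "CC c x i (Suc (Suc m1)) = x i * CC c x (i+1) (Suc m1) + c * CC c x (i+2) m1"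
        using 1 \<open>m = Suc m1\<close> by auto
      have h2: "CC c x i (Suc (Suc m2)) = x i * CC c x (i+1) (Suc m2) + c * CC c x (i+2) m2"
        using 1 \<open>m = Suc m1\<close> Suc by auto
      have a: "CC c x i (Suc (Suc m)) = x (i + int m1 + 2) * CC c x i (Suc (Suc m1)) + c * CC c x i (Suc (Suc m2))"
        using \<open>m = Suc m1\<close> Suc by (simp add: add.assoc)
      have b: "CC c x (i+1) (Suc m) = x (i + int m1 + 2) * CC c x (i+1) (Suc m1) + c * CC c x (i+1) (Suc m2)"
        using \<open>m = Suc m1\<close> Suc by (simp add: algebra_simps)
      have d: "CC c x (i+2) m = x (i + int m1 + 2) * CC c x (i+2) m1 + c * CC c x (i+2) m2"
        using \<open>m = Suc m1\<close> Suc by (simp add: algebra_simps)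
      show ?thesis unfolding a b d h1 h2 by (simp add: algebra_simps)
    qed
  qed
qed

lemma CC_det: "CC c x i (Suc (Suc m)) * CC c x (i+1) m - CC c x i (Suc m) * CC c x (i+1) (Suc m) = c * (-c)^m"
proof (induction m)
  case 0 thus ?case by (simp add: algebra_simps)
next
  case (Suc m)
  have a: "CC c x i (Suc (Suc (Suc m))) = x (i + int m + 2) * CC c x i (Suc (Suc m)) + c * CC c x i (Suc m)"
    by (simp add: algebra_simps)
  have b: "CC c x (i+1) (Suc (Suc m)) = x (i + int m + 2) * CC c x (i+1) (Suc m) + c * CC c x (i+1) m"
    by (simp add: algebra_simps)
  have "CC c x i (Suc (Suc (Suc m))) * CC c x (i+1) (Suc m) - CC c x i (Suc (Suc m)) * CC c x (i+1) (Suc (Suc m))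
     = - c * (CC c x i (Suc (Suc m)) * CC c x (i+1) m - CC c x i (Suc m) * CC c x (i+1) (Suc m))"
    unfolding a b by (simp add: algebra_simps del: CC.simps)
  thus ?case using Suc by simp
qed

theorem mainTheorem9:
  fixes c :: "'a::field" and n :: nat and f :: "int \<Rightarrow> int \<Rightarrow> 'a"
  assumes "c \<noteq> 0" and "n \<ge> 1" and "is_frieze c n f"
  defines "s \<equiv> f 0 (int n)" and "t \<equiv> f 1 (int n + 1)"
  shows "\<forall>k::int. \<forall>i::int. 0 \<le> k \<and> k \<le> int n \<longrightarrow>
      f (2*i) (2*i + k - 1) = f (2*i - 1) (2*i + k - 1) * f (2*i) (2*i + int n - 1) / t
                               + f (2*i - 2) (2*i + k - 1) / c
    \<and> f (2*i + 1) (2*i + k) = f (2*i) (2*i + k) * f (2*i + 1) (2*i + int n) / s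
                               + f (2*i - 1) (2*i + k) / c"
proof (intro allI impI conjI)
  fix k i :: int
  assume kr: "0 \<le> k \<and> k \<le> int n"
  obtain x where adm: "admissible c n x" and fx: "\<forall>(i, j) \<in> Bn n. f i j = cseg c x i j"
    using assms(3) unfolding is_frieze_def by blast
  have fC: "f i j = CC c x i m" if "j = i + int m - 1" "m \<le> n + 2" for i j m
  proof -
    have "(i, j) \<in> Bn n" using that unfolding Bn_def by auto
    hence "f i j = cseg c x i j" using fx by auto
    thus ?thesis using cseg_C[of c x i m] that by simp
  qed
  have A0: "CC c x i (n+2) = 0" for i
  proof -
    have "cseg c x i (i + int n + 1) = 0" using adm unfolding admissible_def by blast
    moreover have "i + int (n+2) - 1 = i + int n + 1" by simp
    ultimately show ?thesis using cseg_C[of c x i "n+2"] by metis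
  qed
  define T where "T j = CC c x j (n+1)" for j
  have prod: "T j * T (j+1) = (-c)^(n+1)" for j
  proof -
    have "CC c x j (Suc (Suc n)) * CC c x (j+1) n - CC c x j (Suc n) * CC c x (j+1) (Suc n) = c * (-c)^n"
      by (rule CC_det)
    moreover have "CC c x j (Suc (Suc n)) = 0" using A0[of j] by simp
    ultimately have "-(T j * T (j+1)) = c * (-c)^n" unfolding T_def by (simp del: CC.simps)
    hence "T j * T (j+1) = - (c * (-c)^n)" by (metis minus_minus)
    thus ?thesis by simp
  qed
  have nz: "T j \<noteq> 0" for j using prod[of j] assms(1) by auto
  have per: "T (j+2) = T j" for j
  proof -
    have "T j * T (j+1) = T (j+1) * T (j+1+1)" using prod[of j] prod[of "j+1"] by simp
    hence "T j = T (j+1+1)" using nz[of "j+1"] by (simp add: mult.commute)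
    thus ?thesis by (simp add: add.assoc)
  qed
  have perI: "T (j + 2*m) = T j" for j m :: int
  proof (induct m rule: int_induct[where k=0])
    case base thus ?case by simp
  next
    case (step1 m)
    have "T (j + 2*(m+1)) = T (j + 2*m + 2)" by (simp add: algebra_simps)
    thus ?case using per step1 by simp
  next
    case (step2 m)
    have "T (j + 2*m) = T (j + 2*(m-1) + 2)" by (simp add: algebra_simps)
    thus ?case using per[of "j + 2*(m-1)"] step2 by simp
  qed
  have tT: "t = T 1" unfolding t_def T_def by (rule fC) auto
  have sT: "s = T 0" unfolding s_def T_def by (rule fC) auto
  obtain kk where kk: "k = int kk" "kk \<le> n" using kr by (metis nat_0_le nat_le_iff)
  have t2: "T (2*i - 1) = t" using perI[of 1 "i - 1"] tT by (simp add: algebra_simps)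
  have s2: "T (2*i) = s" using perI[of 0 i] sT by simp
  have tnz: "t \<noteq> 0" "s \<noteq> 0" using nz t2 s2 by metis+
  have Lg: "CC c x b (Suc (Suc m)) = x b * CC c x (b'') (Suc m) + c * CC c x b' m"
    if "b'' = b + 1" "b' = b + 2" for b b' b'' m using CC_left[of c x b m] that by simp
  have Zg: "0 = x b * T (b'') + c * CC c x b' n"
    if "b'' = b + 1" "b' = b + 2" for b b' b'' using CC_left[of c x b n] A0[of b] that unfolding T_def by (simp add: algebra_simps del: CC.simps)
  show "f (2*i) (2*i + k - 1) = f (2*i - 1) (2*i + k - 1) * f (2*i) (2*i + int n - 1) / t
                               + f (2*i - 2) (2*i + k - 1) / c"
  proof -
    have e1: "f (2*i) (2*i + k - 1) = CC c x (2*i) kk" by (rule fC) (use kk in auto)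
    have e2: "f (2*i - 1) (2*i + k - 1) = CC c x (2*i-1) (Suc kk)" by (rule fC) (use kk in auto)
    have e3: "f (2*i - 2) (2*i + k - 1) = CC c x (2*i-2) (Suc (Suc kk))" by (rule fC) (use kk in auto)
    have e4: "f (2*i) (2*i + int n - 1) = CC c x (2*i) n" by (rule fC) (use kk in auto)
    have L: "CC c x (2*i-2) (Suc (Suc kk)) = x (2*i-2) * CC c x (2*i-1) (Suc kk) + c * CC c x (2*i) kk"
      by (rule Lg) auto
    have Z: "0 = x (2*i-2) * T (2*i-1) + c * CC c x (2*i) n" by (rule Zg) auto
    have Z': "CC c x (2*i) n = - x (2*i-2) * t / c" using Z assms(1) t2 by (simp add: field_simps) (metis add.commute add_eq_0_iff2 mult.commute)
    show ?thesis unfolding e1 e2 e3 e4 L Z' using tnz assms(1) by (simp add: field_simps)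
  qed
  show "f (2*i + 1) (2*i + k) = f (2*i) (2*i + k) * f (2*i + 1) (2*i + int n) / s
                               + f (2*i - 1) (2*i + k) / c"
  proof -
    have e1: "f (2*i + 1) (2*i + k) = CC c x (2*i+1) kk" by (rule fC) (use kk in auto)
    have e2: "f (2*i) (2*i + k) = CC c x (2*i) (Suc kk)" by (rule fC) (use kk in auto)
    have e3: "f (2*i - 1) (2*i + k) = CC c x (2*i-1) (Suc (Suc kk))" by (rule fC) (use kk in auto)
    have e4: "f (2*i + 1) (2*i + int n) = CC c x (2*i+1) n" by (rule fC) (use kk in auto)
    have L: "CC c x (2*i-1) (Suc (Suc kk)) = x (2*i-1) * CC c x (2*i) (Suc kk) + c * CC c x (2*i+1) kk"
      by (rule Lg) auto
    have Z: "0 = x (2*i-1) * T (2*i) + c * CC c x (2*i+1) n" by (rule Zg) auto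
    have Z': "CC c x (2*i+1) n = - x (2*i-1) * s / c" using Z assms(1) s2 by (simp add: field_simps) (metis add.commute add_eq_0_iff2 mult.commute)
    show ?thesis unfolding e1 e2 e3 e4 L Z' using tnz assms(1) by (simp add: field_simps)
  qed
qed

end
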